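(* Let $S=(\mathcal{E},\Sigma,X,\mathcal{O})$ be a distinguishable experiment entity, with central eigen closure system $\mathcal{Y}_{eig}$ and state eigen closure system $\mathcal{F}_{eig}$. Then $\mathcal{F}_{eig}=\mathcal{Y}_{eig}(state)$.
   Context: An entity $S=(\mathcal{E},\Sigma,X,\mathcal{O})$ consists of sets $\mathcal{E},\Sigma$ and for each $e\in\mathcal{E},p\in\Sigma$ a nonempty set $O(e,p)$, with $X=\bigcup O(e,p)$; $O(e)=\bigcup_pO(e,p)$. It is a distinguishable experiment entity iff $O(e)\cap O(f)=\emptyset$ for all distinct $e,f\in\mathcal{E}$. Central eigen map: $(e,p)\in eig(A)\iff O(e,p)\subseteq A$ for $A\subseteq X$; $\mathcal{Y}_{eig}=\{eig(A):A\subseteq X\}$. For $Y\in\mathcal{Y}_{eig}$, $Y_{state}=\{p\in\Sigma:(e,p)\in Y\text{ for all }e\in\mathcal{E}\}$ and $\mathcal{Y}_{eig}(state)=\{Y_{state}:Y\in\mathcal{Y}_{eig}\}$. For $e\in\mathcal{E}$, $eig_e(A)=\{p: O(e,p)\subseteq A\}$ for $A\subseteq O(e)$, $\mathcal{F}(e)=\{eig_e(A):A\subseteq O(e)\}$, and $\mathcal{F}_{eig}$ is the set of all intersections of families of elements of $\bigcup_e\mathcal{F}(e)$. *)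

theory Defs
  imports Main
begin

definition entity :: "'e set \<Rightarrow> 'p set \<Rightarrow> ('e \<Rightarrow> 'p \<Rightarrow> 'x set) \<Rightarrow> bool" where
  "entity E Sig Ob \<longleftrightarrow> (\<forall>e\<in>E. \<forall>p\<in>Sig. Ob e p \<noteq> {})"

definition outcomes :: "'e set \<Rightarrow> 'p set \<Rightarrow> ('e \<Rightarrow> 'p \<Rightarrow> 'x set) \<Rightarrow> 'x set" where
  "outcomes E Sig Ob = (\<Union>e\<in>E. \<Union>p\<in>Sig. Ob e p)"

definition outcomes_of :: "'p set \<Rightarrow> ('e \<Rightarrow> 'p \<Rightarrow> 'x set) \<Rightarrow> 'e \<Rightarrow> 'x set" where
  "outcomes_of Sig Ob e = (\<Union>p\<in>Sig. Ob e p)"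

definition distinguishable_experiment_entity ::
  "'e set \<Rightarrow> 'p set \<Rightarrow> ('e \<Rightarrow> 'p \<Rightarrow> 'x set) \<Rightarrow> bool" where
  "distinguishable_experiment_entity E Sig Ob \<longleftrightarrow> entity E Sig Ob \<and>
     (\<forall>e\<in>E. \<forall>f\<in>E. e \<noteq> f \<longrightarrow> outcomes_of Sig Ob e \<inter> outcomes_of Sig Ob f = {})"

definition eig :: "'e set \<Rightarrow> 'p set \<Rightarrow> ('e \<Rightarrow> 'p \<Rightarrow> 'x set) \<Rightarrow> 'x set \<Rightarrow> ('e \<times> 'p) set" where
  "eig E Sig Ob A = {(e, p). e \<in> E \<and> p \<in> Sig \<and> Ob e p \<subseteq> A}"

definition Y_eig :: "'e set \<Rightarrow> 'p set \<Rightarrow> ('e \<Rightarrow> 'p \<Rightarrow> 'x set) \<Rightarrow> ('e \<times> 'p) set set" where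
  "Y_eig E Sig Ob = {eig E Sig Ob A | A. A \<subseteq> outcomes E Sig Ob}"

definition state_part :: "'e set \<Rightarrow> 'p set \<Rightarrow> ('e \<times> 'p) set \<Rightarrow> 'p set" where
  "state_part E Sig Y = {p \<in> Sig. \<forall>e\<in>E. (e, p) \<in> Y}"

definition Y_eig_state :: "'e set \<Rightarrow> 'p set \<Rightarrow> ('e \<Rightarrow> 'p \<Rightarrow> 'x set) \<Rightarrow> 'p set set" where
  "Y_eig_state E Sig Ob = state_part E Sig ` Y_eig E Sig Ob"

definition eig_e :: "'p set \<Rightarrow> ('e \<Rightarrow> 'p \<Rightarrow> 'x set) \<Rightarrow> 'e \<Rightarrow> 'x set \<Rightarrow> 'p set" where
  "eig_e Sig Ob e A = {p \<in> Sig. Ob e p \<subseteq> A}"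

definition F_exp :: "'p set \<Rightarrow> ('e \<Rightarrow> 'p \<Rightarrow> 'x set) \<Rightarrow> 'e \<Rightarrow> 'p set set" where
  "F_exp Sig Ob e = {eig_e Sig Ob e A | A. A \<subseteq> outcomes_of Sig Ob e}"

text \<open>All intersections (relative to Sigma; the empty family gives Sigma) of
  families of elements of the union of the F(e).\<close>
definition F_eig :: "'e set \<Rightarrow> 'p set \<Rightarrow> ('e \<Rightarrow> 'p \<Rightarrow> 'x set) \<Rightarrow> 'p set set" where
  "F_eig E Sig Ob = {Sig \<inter> \<Inter>G | G. G \<subseteq> (\<Union>e\<in>E. F_exp Sig Ob e)}"

end

theory Submission
  imports Defs
begin

theorem mainTheorem7:
  fixes E :: "'e set" and Sig :: "'p set" and Ob :: "'e \<Rightarrow> 'p \<Rightarrow> 'x set"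
  assumes "distinguishable_experiment_entity E Sig Ob"
  shows "F_eig E Sig Ob = Y_eig_state E Sig Ob"
proof
  have disj: "\<And>e f. e \<in> E \<Longrightarrow> f \<in> E \<Longrightarrow> e \<noteq> f \<Longrightarrow> outcomes_of Sig Ob e \<inter> outcomes_of Sig Ob f = {}"
    using assms unfolding distinguishable_experiment_entity_def by blast
  show "F_eig E Sig Ob \<subseteq> Y_eig_state E Sig Ob"
  proof
    fix S assume "S \<in> F_eig E Sig Ob"
    then obtain G where S: "S = Sig \<inter> \<Inter>G" and G: "G \<subseteq> (\<Union>e\<in>E. F_exp Sig Ob e)"
      unfolding F_eig_def by blast
    have "\<forall>g\<in>G. \<exists>eA. fst eA \<in> E \<and> snd eA \<subseteq> outcomes_of Sig Ob (fst eA) \<and> g = eig_e Sig Ob (fst eA) (snd eA)"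
    proof
      fix g assume "g \<in> G"
      then obtain e B where "e \<in> E" "B \<subseteq> outcomes_of Sig Ob e" "g = eig_e Sig Ob e B"
        using G unfolding F_exp_def by blast
      then show "\<exists>eA. fst eA \<in> E \<and> snd eA \<subseteq> outcomes_of Sig Ob (fst eA) \<and> g = eig_e Sig Ob (fst eA) (snd eA)"
        by (intro exI[of _ "(e, B)"]) simp
    qed
    then obtain c where c: "\<And>g. g \<in> G \<Longrightarrow> fst (c g) \<in> E \<and> snd (c g) \<subseteq> outcomes_of Sig Ob (fst (c g)) \<and> g = eig_e Sig Ob (fst (c g)) (snd (c g))"
      by metis
    define A where "A = outcomes E Sig Ob \<inter> {x. \<forall>g\<in>G. x \<in> outcomes_of Sig Ob (fst (c g)) \<longrightarrow> x \<in> snd (c g)}"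
    have AX: "A \<subseteq> outcomes E Sig Ob" unfolding A_def by blast
    have "state_part E Sig (eig E Sig Ob A) = S"
    proof
      show "state_part E Sig (eig E Sig Ob A) \<subseteq> S"
      proof
        fix p assume "p \<in> state_part E Sig (eig E Sig Ob A)"
        then have p: "p \<in> Sig" "\<And>e. e \<in> E \<Longrightarrow> Ob e p \<subseteq> A"
          unfolding state_part_def eig_def by auto
        have "p \<in> g" if "g \<in> G" for g
        proof -
          have "Ob (fst (c g)) p \<subseteq> A" using p c[OF that] by blast
          moreover have "Ob (fst (c g)) p \<subseteq> outcomes_of Sig Ob (fst (c g))"
            using p unfolding outcomes_of_def by blast
          ultimately have "Ob (fst (c g)) p \<subseteq> snd (c g)" unfolding A_def using that by blast
          then show ?thesis using c[OF that] p unfolding eig_e_def by blast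
        qed
        then show "p \<in> S" using S p by blast
      qed
    next
      show "S \<subseteq> state_part E Sig (eig E Sig Ob A)"
      proof
        fix p assume "p \<in> S"
        then have p: "p \<in> Sig" "\<And>g. g \<in> G \<Longrightarrow> p \<in> g" using S by auto
        have "Ob e p \<subseteq> A" if e: "e \<in> E" for e
        proof
          fix x assume x: "x \<in> Ob e p"
          have xe: "x \<in> outcomes_of Sig Ob e" using x p unfolding outcomes_of_def by blast
          have "x \<in> outcomes E Sig Ob" using x p e unfolding outcomes_def by blast
          moreover have "x \<in> snd (c g)" if g: "g \<in> G" "x \<in> outcomes_of Sig Ob (fst (c g))" for g
          proof -
            have "fst (c g) = e" using disj[OF c[OF g(1), THEN conjunct1] e] xe g(2) by blast
            moreover have "p \<in> eig_e Sig Ob (fst (c g)) (snd (c g))" using p(2)[OF g(1)] c[OF g(1)] by metis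
            ultimately show ?thesis using x unfolding eig_e_def by blast
          qed
          ultimately show "x \<in> A" unfolding A_def by blast
        qed
        then show "p \<in> state_part E Sig (eig E Sig Ob A)"
          using p unfolding state_part_def eig_def by blast
      qed
    qed
    then show "S \<in> Y_eig_state E Sig Ob"
      unfolding Y_eig_state_def Y_eig_def using AX by blast
  qed
next
  show "Y_eig_state E Sig Ob \<subseteq> F_eig E Sig Ob"
  proof
    fix S assume "S \<in> Y_eig_state E Sig Ob"
    then obtain A where S: "S = state_part E Sig (eig E Sig Ob A)"
      unfolding Y_eig_state_def Y_eig_def by blast
    define G where "G = (\<lambda>e. eig_e Sig Ob e (A \<inter> outcomes_of Sig Ob e)) ` E"
    have G: "G \<subseteq> (\<Union>e\<in>E. F_exp Sig Ob e)"
      unfolding G_def F_exp_def by blast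
    have "S = Sig \<inter> \<Inter>G"
    proof (rule set_eqI)
      fix p
      have "p \<in> S \<longleftrightarrow> p \<in> Sig \<and> (\<forall>e\<in>E. Ob e p \<subseteq> A)"
        unfolding S state_part_def eig_def by auto
      moreover have "p \<in> Sig \<Longrightarrow> Ob e p \<subseteq> outcomes_of Sig Ob e" for e
        unfolding outcomes_of_def by blast
      moreover have "p \<in> Sig \<inter> \<Inter>G \<longleftrightarrow> p \<in> Sig \<and> (\<forall>e\<in>E. Ob e p \<subseteq> A \<inter> outcomes_of Sig Ob e)"
        unfolding G_def eig_e_def by auto
      ultimately show "p \<in> S \<longleftrightarrow> p \<in> Sig \<inter> \<Inter>G" by blast
    qed
    then show "S \<in> F_eig E Sig Ob" unfolding F_eig_def using G by blast
  qed
qed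

end
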